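(* In the reachability strategy-improvement algorithm described in the context, let $\gamma_i$ and $\gamma_{i+1}$ be the player-1 selectors obtained at iterations $i$ and $i+1$. If $\gamma_i$ is proper, then $\gamma_{i+1}$ is also proper.
   Context: Concurrent game structure $G=(S,M,\Gamma_1,\Gamma_2,\delta)$: finite states, finite moves, nonempty move sets $\Gamma_i(s)$, $\delta(s,a_1,a_2)\in\mathrm{Distr}(S)$ (simultaneous independent moves). Selectors assign to each state a distribution on available moves; $\overline{\xi}$ is the memoryless strategy playing $\xi$ forever; $\Pr_s^{\pi_1,\pi_2}$ is the induced measure on plays; $\mathrm{Reach}(X)$: plays visiting $X$. $\mathrm{val}_1^{\pi_1}(\mathrm{Reach}(T))(s)=\inf_{\pi_2}\Pr_s^{\pi_1,\pi_2}(\mathrm{Reach}(T))$, $\mathrm{val}_1(\mathrm{Reach}(T))=\sup_{\pi_1}\mathrm{val}_1^{\pi_1}(\mathrm{Reach}(T))$. For a valuation $v:S\to[0,1]$: $\mathrm{Pre}_{\xi_1,\xi_2}(v)(s)=\sum_{a,b}\sum_tv(t)\delta(s,a,b)(t)\xi_1(s)(a)\xi_2(s)(b)$, $\mathrm{Pre}_{1:\xi_1}(v)(s)=\inf_{\xi_2}\mathrm{Pre}_{\xi_1,\xi_2}(v)(s)$, $\mathrm{Pre}_1(v)(s)=\sup_{\xi_1}\mathrm{Pre}_{1:\xi_1}(v)(s)$. Fix $T\subseteq S$, $W_2=\{s:\mathrm{val}_1(\mathrm{Reach}(T))(s)=0\}$; all states of $T\cup W_2$ are absorbing. A player-1 strategy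 is proper if, against every player-2 strategy, from every $s\in S\setminus(T\cup W_2)$, $T\cup W_2$ is reached with probability 1; a selector $\xi$ is proper if $\overline{\xi}$ is. The algorithm: $\gamma_0$ is the uniform selector on $\Gamma_1(s)$, $v_i=\mathrm{val}_1^{\overline{\gamma}_i}(\mathrm{Reach}(T))$. At iteration $i$: $I=\{s\in S\setminus(T\cup W_2):\mathrm{Pre}_1(v_i)(s)>v_i(s)\}$; $\xi_1$ is a selector with $\mathrm{Pre}_{1:\xi_1}(v_i)(s)=\mathrm{Pre}_1(v_i)(s)$ for $s\in I$; $\gamma_{i+1}(s)=\gamma_i(s)$ for $s\notin I$ and $\gamma_{i+1}(s)=\xi_1(s)$ for $s\in I$; stop when $I=\emptyset$. *)

theory Defs
  imports "HOL-Probability.Probability_Mass_Function"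
begin

definition cgs :: "('s::finite \<Rightarrow> 'm::finite set) \<Rightarrow> ('s \<Rightarrow> 'm set) \<Rightarrow> bool" where
  "cgs Mv1 Mv2 \<longleftrightarrow> (\<forall>s. Mv1 s \<noteq> {} \<and> Mv2 s \<noteq> {})"

definition strategy :: "('s \<Rightarrow> 'm set) \<Rightarrow> ('s list \<Rightarrow> 'm pmf) \<Rightarrow> bool" where
  "strategy Mv \<pi> \<longleftrightarrow> (\<forall>h. h \<noteq> [] \<longrightarrow> set_pmf (\<pi> h) \<subseteq> Mv (last h))"

definition selector :: "('s \<Rightarrow> 'm set) \<Rightarrow> ('s \<Rightarrow> 'm pmf) \<Rightarrow> bool" where
  "selector Mv xi \<longleftrightarrow> (\<forall>s. set_pmf (xi s) \<subseteq> Mv s)"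

definition memoryless :: "('s \<Rightarrow> 'm pmf) \<Rightarrow> ('s list \<Rightarrow> 'm pmf)" where
  "memoryless xi = (\<lambda>h. xi (last h))"

definition uniform_selector :: "('s \<Rightarrow> 'm set) \<Rightarrow> ('s \<Rightarrow> 'm pmf)" where
  "uniform_selector Mv = (\<lambda>s. pmf_of_set (Mv s))"

fun reach_n :: "('s::finite \<Rightarrow> 'm::finite \<Rightarrow> 'm \<Rightarrow> 's pmf) \<Rightarrow> 's set
    \<Rightarrow> ('s list \<Rightarrow> 'm pmf) \<Rightarrow> ('s list \<Rightarrow> 'm pmf) \<Rightarrow> nat \<Rightarrow> 's list \<Rightarrow> real" where
  "reach_n delta X \<pi>1 \<pi>2 0 h = (if last h \<in> X then 1 else 0)"
| "reach_n delta X \<pi>1 \<pi>2 (Suc n) h =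
     (if last h \<in> X then 1 else
       (\<Sum>a\<in>UNIV. \<Sum>b\<in>UNIV. pmf (\<pi>1 h) a * pmf (\<pi>2 h) b *
          (\<Sum>t\<in>UNIV. pmf (delta (last h) a b) t * reach_n delta X \<pi>1 \<pi>2 n (h @ [t]))))"

text \<open>Pr_s^{\<pi>1,\<pi>2}(Reach X), as the limit (supremum) of the finite-horizon probabilities
  (continuity of the induced measure on plays).\<close>
definition prob_reach :: "('s::finite \<Rightarrow> 'm::finite \<Rightarrow> 'm \<Rightarrow> 's pmf) \<Rightarrow> 's set
    \<Rightarrow> ('s list \<Rightarrow> 'm pmf) \<Rightarrow> ('s list \<Rightarrow> 'm pmf) \<Rightarrow> 's \<Rightarrow> real" where
  "prob_reach delta X \<pi>1 \<pi>2 s = (SUP n. reach_n delta X \<pi>1 \<pi>2 n [s])"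

definition val1_strat :: "('s \<Rightarrow> 'm set) \<Rightarrow> ('s::finite \<Rightarrow> 'm::finite \<Rightarrow> 'm \<Rightarrow> 's pmf)
    \<Rightarrow> 's set \<Rightarrow> ('s list \<Rightarrow> 'm pmf) \<Rightarrow> 's \<Rightarrow> real" where
  "val1_strat Mv2 delta T \<pi>1 s =
     (INF \<pi>2 \<in> {\<pi>2. strategy Mv2 \<pi>2}. prob_reach delta T \<pi>1 \<pi>2 s)"

definition val1 :: "('s \<Rightarrow> 'm set) \<Rightarrow> ('s \<Rightarrow> 'm set) \<Rightarrow> ('s::finite \<Rightarrow> 'm::finite \<Rightarrow> 'm \<Rightarrow> 's pmf)
    \<Rightarrow> 's set \<Rightarrow> 's \<Rightarrow> real" where
  "val1 Mv1 Mv2 delta T s =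
     (SUP \<pi>1 \<in> {\<pi>1. strategy Mv1 \<pi>1}. val1_strat Mv2 delta T \<pi>1 s)"

definition W2 :: "('s \<Rightarrow> 'm set) \<Rightarrow> ('s \<Rightarrow> 'm set) \<Rightarrow> ('s::finite \<Rightarrow> 'm::finite \<Rightarrow> 'm \<Rightarrow> 's pmf)
    \<Rightarrow> 's set \<Rightarrow> 's set" where
  "W2 Mv1 Mv2 delta T = {s. val1 Mv1 Mv2 delta T s = 0}"

definition absorbing :: "('s \<Rightarrow> 'm set) \<Rightarrow> ('s \<Rightarrow> 'm set) \<Rightarrow> ('s \<Rightarrow> 'm \<Rightarrow> 'm \<Rightarrow> 's pmf) \<Rightarrow> 's set \<Rightarrow> bool" where
  "absorbing Mv1 Mv2 delta X \<longleftrightarrow>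
     (\<forall>s\<in>X. \<forall>a\<in>Mv1 s. \<forall>b\<in>Mv2 s. delta s a b = return_pmf s)"

definition proper_strategy :: "('s \<Rightarrow> 'm set) \<Rightarrow> ('s \<Rightarrow> 'm set) \<Rightarrow> ('s::finite \<Rightarrow> 'm::finite \<Rightarrow> 'm \<Rightarrow> 's pmf)
    \<Rightarrow> 's set \<Rightarrow> ('s list \<Rightarrow> 'm pmf) \<Rightarrow> bool" where
  "proper_strategy Mv1 Mv2 delta T \<pi>1 \<longleftrightarrow>
     (\<forall>\<pi>2. strategy Mv2 \<pi>2 \<longrightarrow>
        (\<forall>s. s \<notin> T \<union> W2 Mv1 Mv2 delta T \<longrightarrow>
           prob_reach delta (T \<union> W2 Mv1 Mv2 delta T) \<pi>1 \<pi>2 s = 1))"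

definition proper_selector :: "('s \<Rightarrow> 'm set) \<Rightarrow> ('s \<Rightarrow> 'm set) \<Rightarrow> ('s::finite \<Rightarrow> 'm::finite \<Rightarrow> 'm \<Rightarrow> 's pmf)
    \<Rightarrow> 's set \<Rightarrow> ('s \<Rightarrow> 'm pmf) \<Rightarrow> bool" where
  "proper_selector Mv1 Mv2 delta T xi \<longleftrightarrow>
     proper_strategy Mv1 Mv2 delta T (memoryless xi)"

definition Pre_pair :: "('s::finite \<Rightarrow> 'm::finite \<Rightarrow> 'm \<Rightarrow> 's pmf) \<Rightarrow> ('s \<Rightarrow> real)
    \<Rightarrow> ('s \<Rightarrow> 'm pmf) \<Rightarrow> ('s \<Rightarrow> 'm pmf) \<Rightarrow> 's \<Rightarrow> real" where
  "Pre_pair delta v xi1 xi2 s =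
     (\<Sum>a\<in>UNIV. \<Sum>b\<in>UNIV. \<Sum>t\<in>UNIV. v t * pmf (delta s a b) t * pmf (xi1 s) a * pmf (xi2 s) b)"

definition Pre1_sel :: "('s \<Rightarrow> 'm set) \<Rightarrow> ('s::finite \<Rightarrow> 'm::finite \<Rightarrow> 'm \<Rightarrow> 's pmf)
    \<Rightarrow> ('s \<Rightarrow> real) \<Rightarrow> ('s \<Rightarrow> 'm pmf) \<Rightarrow> 's \<Rightarrow> real" where
  "Pre1_sel Mv2 delta v xi1 s = (INF xi2 \<in> {xi2. selector Mv2 xi2}. Pre_pair delta v xi1 xi2 s)"

definition Pre1 :: "('s \<Rightarrow> 'm set) \<Rightarrow> ('s \<Rightarrow> 'm set) \<Rightarrow> ('s::finite \<Rightarrow> 'm::finite \<Rightarrow> 'm \<Rightarrow> 's pmf)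
    \<Rightarrow> ('s \<Rightarrow> real) \<Rightarrow> 's \<Rightarrow> real" where
  "Pre1 Mv1 Mv2 delta v s = (SUP xi1 \<in> {xi1. selector Mv1 xi1}. Pre1_sel Mv2 delta v xi1 s)"

definition improve_step :: "('s \<Rightarrow> 'm set) \<Rightarrow> ('s \<Rightarrow> 'm set) \<Rightarrow> ('s::finite \<Rightarrow> 'm::finite \<Rightarrow> 'm \<Rightarrow> 's pmf)
    \<Rightarrow> 's set \<Rightarrow> ('s \<Rightarrow> 'm pmf) \<Rightarrow> ('s \<Rightarrow> 'm pmf) \<Rightarrow> bool" where
  "improve_step Mv1 Mv2 delta T gamma gamma' \<longleftrightarrow>
     (let v = val1_strat Mv2 delta T (memoryless gamma);
          I = {s. s \<notin> T \<union> W2 Mv1 Mv2 delta T \<and> Pre1 Mv1 Mv2 delta v s > v s}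
      in \<exists>xi1. selector Mv1 xi1 \<and>
               (\<forall>s\<in>I. Pre1_sel Mv2 delta v xi1 s = Pre1 Mv1 Mv2 delta v s) \<and>
               gamma' = (\<lambda>s. if s \<in> I then xi1 s else gamma s))"

end

theory Submission
  imports Defs
begin


lemma sum_pmf_UNIV: "(\<Sum>t\<in>(UNIV::'a::finite set). pmf p t) = 1"
  by (rule sum_pmf_eq_1) auto

lemma weights1:
  fixes p q :: "'m::finite pmf" and d :: "'m \<Rightarrow> 'm \<Rightarrow> 's::finite pmf"
  shows "(\<Sum>a\<in>UNIV. \<Sum>b\<in>UNIV. pmf p a * pmf q b * (\<Sum>t\<in>UNIV. pmf (d a b) t)) = 1"
  by (simp add: sum_pmf_UNIV flip: sum_distrib_right sum_distrib_left)

definition avg :: "'m::finite pmf \<Rightarrow> 'm pmf \<Rightarrow> ('m \<Rightarrow> 'm \<Rightarrow> 's::finite pmf) \<Rightarrow> ('s \<Rightarrow> real) \<Rightarrow> real" where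
  "avg p q d f = (\<Sum>a\<in>UNIV. \<Sum>b\<in>UNIV. pmf p a * pmf q b * (\<Sum>t\<in>UNIV. pmf (d a b) t * f t))"

lemma avg_sub: "avg p q d (\<lambda>t. 1 - f t) = 1 - avg p q d f"
proof -
  have "avg p q d (\<lambda>t. 1 - f t) = (\<Sum>a\<in>UNIV. \<Sum>b\<in>UNIV. pmf p a * pmf q b * (\<Sum>t\<in>UNIV. pmf (d a b) t))
     - avg p q d f"
    unfolding avg_def by (simp add: right_diff_distrib sum_subtractf)
  then show ?thesis using weights1[of p q d] by simp
qed

lemma avg_mono: "(\<And>t. f t \<le> g t) \<Longrightarrow> avg p q d f \<le> avg p q d g"
  unfolding avg_def
  by (intro sum_mono mult_left_mono) (auto intro: mult_left_mono)

lemma avg_scale: "avg p q d (\<lambda>t. f t * c) = avg p q d f * c"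
  unfolding avg_def by (simp add: sum_distrib_right mult.assoc)

lemma avg_const: "avg p q d (\<lambda>t. c) = c"
  unfolding avg_def
  by (simp add: sum_pmf_UNIV mult.assoc flip: sum_distrib_right sum_distrib_left)

lemma avg_nonneg: "(\<And>t. 0 \<le> f t) \<Longrightarrow> 0 \<le> avg p q d f"
  unfolding avg_def by (intro sum_nonneg mult_nonneg_nonneg) auto

lemma reach_Suc: "reach_n delta X \<pi>1 \<pi>2 (Suc n) h =
   (if last h \<in> X then 1 else avg (\<pi>1 h) (\<pi>2 h) (delta (last h)) (\<lambda>t. reach_n delta X \<pi>1 \<pi>2 n (h @ [t])))"
  by (simp add: avg_def)

declare reach_n.simps(2)[simp del]

lemma reach_in: "last h \<in> X \<Longrightarrow> reach_n delta X \<pi>1 \<pi>2 n h = 1"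
  by (cases n) (auto simp: reach_Suc)

lemma reach_nonneg: "0 \<le> reach_n delta X \<pi>1 \<pi>2 n h"
  by (induction n arbitrary: h) (auto simp: reach_Suc intro!: avg_nonneg)

lemma reach_le1: "reach_n delta X \<pi>1 \<pi>2 n h \<le> 1"
proof (induction n arbitrary: h)
  case (Suc n)
  then show ?case
    using avg_mono[of "\<lambda>t. reach_n delta X \<pi>1 \<pi>2 n (h @ [t])" "\<lambda>t. 1" "\<pi>1 h" "\<pi>2 h" "delta (last h)"]
    by (simp add: reach_Suc avg_const)
qed simp

lemma reach_mono: "reach_n delta X \<pi>1 \<pi>2 n h \<le> reach_n delta X \<pi>1 \<pi>2 (Suc n) h"
proof (induction n arbitrary: h)
  case 0
  then show ?case by (simp add: reach_Suc reach_nonneg avg_nonneg)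
next
  case (Suc n)
  then show ?case
    by (subst (1 2) reach_Suc) (auto intro: avg_mono)
qed

lemma reach_mono_le: "n \<le> m \<Longrightarrow> reach_n delta X \<pi>1 \<pi>2 n h \<le> reach_n delta X \<pi>1 \<pi>2 m h"
  by (induction m rule: dec_induct) (auto intro: order_trans reach_mono)

lemma reach_shift: "h \<noteq> [] \<Longrightarrow> reach_n delta X \<pi>1 \<pi>2 n (x # h) =
   reach_n delta X (\<lambda>h. \<pi>1 (x # h)) (\<lambda>h. \<pi>2 (x # h)) n h"
  by (induction n arbitrary: h) (auto simp: reach_Suc)

lemma reach_cong: "(\<forall>ys. \<pi>1 (h @ ys) = \<pi>1' (h @ ys)) \<Longrightarrow> (\<forall>ys. \<pi>2 (h @ ys) = \<pi>2' (h @ ys)) \<Longrightarrow>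
   reach_n delta X \<pi>1 \<pi>2 n h = reach_n delta X \<pi>1' \<pi>2' n h"
proof (induction n arbitrary: h)
  case (Suc n)
  have e1: "\<pi>1 h = \<pi>1' h" "\<pi>2 h = \<pi>2' h" using Suc.prems[rule_format, of "[]"] by auto
  have "reach_n delta X \<pi>1 \<pi>2 n (h @ [t]) = reach_n delta X \<pi>1' \<pi>2' n (h @ [t])" for t
    using Suc.prems by (intro Suc.IH) (metis append.assoc append_Cons append_Nil)+
  then show ?case by (simp add: reach_Suc e1)
qed simp

lemma prob_reach_ge: "reach_n delta X \<pi>1 \<pi>2 n [s] \<le> prob_reach delta X \<pi>1 \<pi>2 s"
  unfolding prob_reach_def
  by (rule cSUP_upper) (auto intro!: bdd_aboveI[where M=1] reach_le1)

lemma prob_reach_nonneg: "0 \<le> prob_reach delta X \<pi>1 \<pi>2 s"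
  using prob_reach_ge[of delta X \<pi>1 \<pi>2 0 s] reach_nonneg[of delta X \<pi>1 \<pi>2 0 "[s]"] by linarith

lemma prob_reach_le1: "prob_reach delta X \<pi>1 \<pi>2 s \<le> 1"
  unfolding prob_reach_def by (rule cSUP_least) (auto intro: reach_le1)



lemma avg_return: "avg p (return_pmf b) d f = (\<Sum>a\<in>UNIV. pmf p a * (\<Sum>t\<in>UNIV. pmf (d a b) t * f t))"
proof -
  have "(\<Sum>b'\<in>UNIV. pmf p a * pmf (return_pmf b) b' * (\<Sum>t\<in>UNIV. pmf (d a b') t * f t))
     = pmf p a * (\<Sum>t\<in>UNIV. pmf (d a b) t * f t)" for a
  proof -
    have "(\<Sum>b'\<in>UNIV. pmf p a * pmf (return_pmf b) b' * (\<Sum>t\<in>UNIV. pmf (d a b') t * f t))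
       = (\<Sum>b'\<in>UNIV. if b' = b then pmf p a * (\<Sum>t\<in>UNIV. pmf (d a b) t * f t) else 0)"
      by (rule sum.cong) (auto simp: indicator_def)
    then show ?thesis by simp
  qed
  then show ?thesis unfolding avg_def by simp
qed

lemma memoryless_app: "memoryless xi h = xi (last h)"
  by (simp add: memoryless_def)

lemma trap_zero:
  assumes trap: "\<forall>s\<in>Z. s \<notin> X \<and> (\<forall>a t. pmf (g s) a > 0 \<longrightarrow> pmf (delta s a (\<beta> s)) t > 0 \<longrightarrow> t \<in> Z)"
  shows "last h \<in> Z \<Longrightarrow> reach_n delta X (memoryless g) (memoryless (\<lambda>s. return_pmf (\<beta> s))) n h = 0"
proof (induction n arbitrary: h)
  case 0
  then show ?case using trap by auto
next
  case (Suc n)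
  let ?s = "last h"
  have nX: "?s \<notin> X" using trap Suc.prems by auto
  have "pmf (g ?s) a * (pmf (delta ?s a (\<beta> ?s)) t *
          reach_n delta X (memoryless g) (memoryless (\<lambda>s. return_pmf (\<beta> s))) n (h @ [t])) = 0" for a t
  proof (cases "pmf (g ?s) a > 0 \<and> pmf (delta ?s a (\<beta> ?s)) t > 0")
    case True
    then have "t \<in> Z" using trap Suc.prems by auto
    then show ?thesis using Suc.IH[of "h @ [t]"] by simp
  next
    case False
    then show ?thesis by (auto simp: not_less pmf_nonneg order.antisym)
  qed
  note z = this
  have e: "memoryless g h = g (last h)" "memoryless (\<lambda>s. return_pmf (\<beta> s)) h = return_pmf (\<beta> (last h))"
    by (simp_all add: memoryless_def)
  show ?case using nX
    unfolding reach_Suc avg_return e sum_distrib_left by (simp only: z if_False sum.neutral_const)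
qed

lemma trap_improper:
  assumes ne: "\<forall>s. Mv2 s \<noteq> {}"
    and trap: "\<forall>s\<in>Z. s \<notin> X \<and> \<beta> s \<in> Mv2 s \<and> (\<forall>a t. pmf (g s) a > 0 \<longrightarrow> pmf (delta s a (\<beta> s)) t > 0 \<longrightarrow> t \<in> Z)"
    and s0: "s0 \<in> Z"
  shows "\<exists>\<pi>2. strategy Mv2 \<pi>2 \<and> prob_reach delta X (memoryless g) \<pi>2 s0 = 0"
proof -
  define \<beta>' where "\<beta>' s = (if s \<in> Z then \<beta> s else (SOME c. c \<in> Mv2 s))" for s
  have b': "\<beta>' s \<in> Mv2 s" for s
    using trap ne by (auto simp: \<beta>'_def some_in_eq)
  have tr: "\<forall>s\<in>Z. s \<notin> X \<and> (\<forall>a t. pmf (g s) a > 0 \<longrightarrow> pmf (delta s a (\<beta>' s)) t > 0 \<longrightarrow> t \<in> Z)"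
    using trap by (auto simp: \<beta>'_def)
  have "strategy Mv2 (memoryless (\<lambda>s. return_pmf (\<beta>' s)))"
    using b' by (auto simp: strategy_def memoryless_def)
  moreover have "prob_reach delta X (memoryless g) (memoryless (\<lambda>s. return_pmf (\<beta>' s))) s0 = 0"
    unfolding prob_reach_def using trap_zero[where Z=Z and \<beta>=\<beta>' and g=g and delta=delta and X=X, OF tr, of "[s0]"] s0 by simp
  ultimately show ?thesis by blast
qed

fun att :: "('s::finite \<Rightarrow> 'm::finite \<Rightarrow> 'm \<Rightarrow> 's pmf) \<Rightarrow> 's set \<Rightarrow> ('s \<Rightarrow> 'm pmf) \<Rightarrow> ('s \<Rightarrow> 'm set) \<Rightarrow> nat \<Rightarrow> 's set" where
  "att delta X g Mv2 0 = X"
| "att delta X g Mv2 (Suc k) = att delta X g Mv2 k \<union>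
     {s. \<forall>b\<in>Mv2 s. \<exists>a t. pmf (g s) a > 0 \<and> pmf (delta s a b) t > 0 \<and> t \<in> att delta X g Mv2 k}"

lemma att_mono: "k \<le> l \<Longrightarrow> att delta X g Mv2 k \<subseteq> att delta X g Mv2 l"
  by (induction l rule: dec_induct) auto

lemma att_stab:
  fixes delta :: "'s::finite \<Rightarrow> 'm::finite \<Rightarrow> 'm \<Rightarrow> 's pmf"
  shows "\<exists>N. att delta X g Mv2 (Suc N) = att delta X g Mv2 N"
proof (rule ccontr)
  assume "\<not> ?thesis"
  then have ps: "att delta X g Mv2 N \<subset> att delta X g Mv2 (Suc N)" for N by auto
  have "n \<le> card (att delta X g Mv2 n)" for n
  proof (induction n)
    case (Suc n)
    have "card (att delta X g Mv2 n) < card (att delta X g Mv2 (Suc n))"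
      by (rule psubset_card_mono[OF _ ps]) simp
    then show ?case using Suc by simp
  qed simp
  moreover have "card (att delta X g Mv2 n) \<le> card (UNIV :: 's set)" for n
    by (rule card_mono) auto
  ultimately show False
    by (metis Suc_n_not_le_n order_trans)
qed

definition pmin :: "('s::finite \<Rightarrow> 'm::finite \<Rightarrow> 'm \<Rightarrow> 's pmf) \<Rightarrow> ('s \<Rightarrow> 'm pmf) \<Rightarrow> real" where
  "pmin delta g = Min (insert 1 {pmf (g s) a * pmf (delta s a b) t | s a b t. 0 < pmf (g s) a * pmf (delta s a b) t})"

lemma pmin_fin:
  fixes delta :: "'s::finite \<Rightarrow> 'm::finite \<Rightarrow> 'm \<Rightarrow> 's pmf"
  shows "finite {pmf (g s) a * pmf (delta s a b) t | s a b t. 0 < pmf (g s) a * pmf (delta s a b) t}"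
proof -
  have "{pmf (g s) a * pmf (delta s a b) t | s a b t. 0 < pmf (g s) a * pmf (delta s a b) t}
     \<subseteq> (\<lambda>(s,a,b,t). pmf (g s) a * pmf (delta s a b) t) ` UNIV" by (auto simp: image_iff) force
  then show ?thesis by (rule finite_subset) simp
qed

lemma pmin_pos: "0 < pmin delta g"
  unfolding pmin_def using pmin_fin[of g delta] by (subst Min_gr_iff) auto

lemma pmin_le1: "pmin delta g \<le> 1"
  unfolding pmin_def using pmin_fin[of g delta] by (intro Min_le) auto

lemma pmin_le: "0 < pmf (g s) a * pmf (delta s a b) t \<Longrightarrow> pmin delta g \<le> pmf (g s) a * pmf (delta s a b) t"
  unfolding pmin_def using pmin_fin[of g delta] by (intro Min_le) auto



lemma att_bound:
  fixes delta :: "'s::finite \<Rightarrow> 'm::finite \<Rightarrow> 'm \<Rightarrow> 's pmf"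
  assumes st: "strategy Mv2 \<pi>2"
  shows "h \<noteq> [] \<Longrightarrow> last h \<in> att delta X g Mv2 k \<Longrightarrow>
     pmin delta g ^ k \<le> reach_n delta X (memoryless g) \<pi>2 k h"
proof (induction k arbitrary: h)
  case 0
  then show ?case by (simp add: reach_in)
next
  case (Suc k)
  let ?p = "pmin delta g"
  have p0: "0 \<le> ?p" "?p \<le> 1" using pmin_pos[of delta g] pmin_le1[of delta g] by auto
  show ?case
  proof (cases "last h \<in> att delta X g Mv2 k")
    case True
    have "?p ^ Suc k \<le> ?p ^ k" using p0 by (intro power_decreasing) auto
    also have "\<dots> \<le> reach_n delta X (memoryless g) \<pi>2 k h" using Suc.IH[OF Suc.prems(1) True] .
    also have "\<dots> \<le> reach_n delta X (memoryless g) \<pi>2 (Suc k) h" by (rule reach_mono)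
    finally show ?thesis .
  next
    case False
    let ?s = "last h"
    have nX: "?s \<notin> X" using False att_mono[of 0 k delta X g Mv2] by auto
    have rl: "\<forall>b\<in>Mv2 ?s. \<exists>a t. pmf (g ?s) a > 0 \<and> pmf (delta ?s a b) t > 0 \<and> t \<in> att delta X g Mv2 k"
      using False Suc.prems(2) by auto
    from rl obtain A B where AB: "\<forall>b\<in>Mv2 ?s. pmf (g ?s) (A b) > 0 \<and> pmf (delta ?s (A b) b) (B b) > 0
        \<and> B b \<in> att delta X g Mv2 k"
      by metis
    define R where "R t = reach_n delta X (memoryless g) \<pi>2 k (h @ [t])" for t
    have Rnn: "0 \<le> R t" for t unfolding R_def by (rule reach_nonneg)
    have sup: "set_pmf (\<pi>2 h) \<subseteq> Mv2 ?s" using st Suc.prems(1) by (auto simp: strategy_def)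
    have tm: "pmf (\<pi>2 h) b * ?p ^ Suc k \<le>
       (\<Sum>a\<in>UNIV. pmf (g ?s) a * pmf (\<pi>2 h) b * (\<Sum>t\<in>UNIV. pmf (delta ?s a b) t * R t))" for b
    proof (cases "pmf (\<pi>2 h) b > 0")
      case False
      then have "pmf (\<pi>2 h) b = 0" using pmf_nonneg[of "\<pi>2 h" b] by linarith
      then show ?thesis by simp
    next
      case True
      then have bM: "b \<in> Mv2 ?s" using sup by (auto simp: set_pmf_eq)
      let ?a = "A b" and ?t = "B b"
      have ga: "0 < pmf (g ?s) ?a" and dt: "0 < pmf (delta ?s ?a b) ?t" and ta: "?t \<in> att delta X g Mv2 k"
        using AB bM by auto
      have Rt: "?p ^ k \<le> R ?t" unfolding R_def by (rule Suc.IH) (use ta in auto)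
      have pp: "?p \<le> pmf (g ?s) ?a * pmf (delta ?s ?a b) ?t"
        by (rule pmin_le) (use ga dt in simp)
      have "pmf (\<pi>2 h) b * ?p ^ Suc k = pmf (\<pi>2 h) b * (?p * ?p ^ k)" by simp
      also have "\<dots> \<le> pmf (\<pi>2 h) b * ((pmf (g ?s) ?a * pmf (delta ?s ?a b) ?t) * R ?t)"
        by (intro mult_left_mono mult_mono pp Rt) (use p0 in auto)
      also have "\<dots> = pmf (g ?s) ?a * pmf (\<pi>2 h) b * (pmf (delta ?s ?a b) ?t * R ?t)"
        by (simp add: algebra_simps)
      also have "\<dots> \<le> pmf (g ?s) ?a * pmf (\<pi>2 h) b * (\<Sum>t\<in>UNIV. pmf (delta ?s ?a b) t * R t)"
        by (intro mult_left_mono member_le_sum) (auto simp: Rnn)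
      also have "\<dots> \<le> (\<Sum>a\<in>UNIV. pmf (g ?s) a * pmf (\<pi>2 h) b * (\<Sum>t\<in>UNIV. pmf (delta ?s a b) t * R t))"
        by (rule member_le_sum) (auto intro!: mult_nonneg_nonneg sum_nonneg simp: Rnn)
      finally show ?thesis .
    qed
    have "?p ^ Suc k = (\<Sum>b\<in>UNIV. pmf (\<pi>2 h) b * ?p ^ Suc k)"
      by (simp add: sum_pmf_UNIV flip: sum_distrib_right)
    also have "\<dots> \<le> (\<Sum>b\<in>UNIV. \<Sum>a\<in>UNIV. pmf (g ?s) a * pmf (\<pi>2 h) b * (\<Sum>t\<in>UNIV. pmf (delta ?s a b) t * R t))"
      by (rule sum_mono) (rule tm)
    also have "\<dots> = avg (g ?s) (\<pi>2 h) (delta ?s) R"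
      unfolding avg_def by (rule sum.swap)
    also have "\<dots> = reach_n delta X (memoryless g) \<pi>2 (Suc k) h"
      using nX unfolding R_def by (simp add: reach_Suc memoryless_app)
    finally show ?thesis .
  qed
qed

lemma amplify:
  assumes "\<forall>h. h \<noteq> [] \<longrightarrow> 1 - reach_n delta X \<pi>1 \<pi>2 m h \<le> c" "0 \<le> c"
  shows "h \<noteq> [] \<Longrightarrow> 1 - reach_n delta X \<pi>1 \<pi>2 (n + m) h \<le> (1 - reach_n delta X \<pi>1 \<pi>2 n h) * c"
proof (induction n arbitrary: h)
  case 0
  then show ?case using assms by (cases "last h \<in> X") (auto simp: reach_in)
next
  case (Suc n)
  show ?case
  proof (cases "last h \<in> X")
    case True
    then show ?thesis by (simp add: reach_in)
  next
    case False
    let ?A = "avg (\<pi>1 h) (\<pi>2 h) (delta (last h))"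
    have "1 - reach_n delta X \<pi>1 \<pi>2 (Suc n + m) h = ?A (\<lambda>t. 1 - reach_n delta X \<pi>1 \<pi>2 (n + m) (h @ [t]))"
      using False by (simp add: reach_Suc avg_sub)
    also have "\<dots> \<le> ?A (\<lambda>t. (1 - reach_n delta X \<pi>1 \<pi>2 n (h @ [t])) * c)"
      by (rule avg_mono) (rule Suc.IH, simp)
    also have "\<dots> = (1 - reach_n delta X \<pi>1 \<pi>2 (Suc n) h) * c"
      using False by (simp add: reach_Suc avg_sub avg_scale)
    finally show ?thesis .
  qed
qed

lemma no_trap_proper:
  fixes delta :: "'s::finite \<Rightarrow> 'm::finite \<Rightarrow> 'm \<Rightarrow> 's pmf"
  assumes all: "\<forall>s. s \<in> att delta X g Mv2 N" and st: "strategy Mv2 \<pi>2"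
  shows "prob_reach delta X (memoryless g) \<pi>2 s = 1"
proof -
  define q where "q = pmin delta g ^ N"
  have q: "0 < q" "q \<le> 1" unfolding q_def using pmin_pos[of delta g] pmin_le1[of delta g]
    by (auto simp: power_le_one)
  have base: "\<forall>h. h \<noteq> [] \<longrightarrow> q \<le> reach_n delta X (memoryless g) \<pi>2 N h"
    unfolding q_def using att_bound[OF st] all by blast
  have pw: "h \<noteq> [] \<Longrightarrow> 1 - reach_n delta X (memoryless g) \<pi>2 (k * N) h \<le> (1 - q) ^ k" for k h
  proof (induction k arbitrary: h)
    case 0
    then show ?case using reach_nonneg[of delta X "memoryless g" \<pi>2 0 h] by simp
  next
    case (Suc k)
    have "1 - reach_n delta X (memoryless g) \<pi>2 (N + k * N) h
        \<le> (1 - reach_n delta X (memoryless g) \<pi>2 N h) * (1 - q) ^ k"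
      by (rule amplify) (use Suc q in auto)
    also have "\<dots> \<le> (1 - q) * (1 - q) ^ k"
      by (rule mult_right_mono) (use base Suc.prems q in auto)
    finally show ?case by (simp add: add.commute)
  qed
  have lo: "1 - (1 - q) ^ k \<le> prob_reach delta X (memoryless g) \<pi>2 s" for k
    using pw[of "[s]" k] prob_reach_ge[of delta X "memoryless g" \<pi>2 "k * N" s] by simp
  show ?thesis
  proof (rule ccontr)
    assume "prob_reach delta X (memoryless g) \<pi>2 s \<noteq> 1"
    then have lt: "prob_reach delta X (memoryless g) \<pi>2 s < 1" using prob_reach_le1 order_le_neq_trans by blast
    obtain k where "(1 - q) ^ k < 1 - prob_reach delta X (memoryless g) \<pi>2 s"
      using real_arch_pow_inv[of "1 - prob_reach delta X (memoryless g) \<pi>2 s" "1 - q"] lt q by auto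
    then show False using lo[of k] by simp
  qed
qed



lemma avg_lin: "avg p q d (\<lambda>t. c - f t) = c - avg p q d f"
proof -
  have "avg p q d (\<lambda>t. c - f t) = avg p q d (\<lambda>t. c) - avg p q d f"
    unfolding avg_def by (simp add: right_diff_distrib sum_subtractf)
  then show ?thesis by (simp add: avg_const)
qed

lemma avg_add: "avg p q d (\<lambda>t. f t + c) = avg p q d f + c"
proof -
  have "avg p q d (\<lambda>t. f t + c) = avg p q d f + avg p q d (\<lambda>t. c)"
    unfolding avg_def by (simp add: distrib_left sum.distrib)
  then show ?thesis by (simp add: avg_const)
qed

lemma avg_mono_supp:
  assumes "\<And>a b t. pmf p a > 0 \<Longrightarrow> pmf q b > 0 \<Longrightarrow> pmf (d a b) t > 0 \<Longrightarrow> f t \<le> g t"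
  shows "avg p q d f \<le> avg p q d g"
  unfolding avg_def
proof (intro sum_mono)
  fix a b
  show "pmf p a * pmf q b * (\<Sum>t\<in>UNIV. pmf (d a b) t * f t) \<le> pmf p a * pmf q b * (\<Sum>t\<in>UNIV. pmf (d a b) t * g t)"
  proof (cases "pmf p a > 0 \<and> pmf q b > 0")
    case True
    have "pmf (d a b) t * f t \<le> pmf (d a b) t * g t" for t
    proof (cases "pmf (d a b) t > 0")
      case True2: True
      then show ?thesis using assms True by (intro mult_left_mono) auto
    next
      case False
      then have "pmf (d a b) t = 0" using pmf_nonneg[of "d a b" t] by linarith
      then show ?thesis by simp
    qed
    then have "(\<Sum>t\<in>UNIV. pmf (d a b) t * f t) \<le> (\<Sum>t\<in>UNIV. pmf (d a b) t * g t)" by (rule sum_mono)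
    then show ?thesis by (rule mult_left_mono) simp
  next
    case False
    then have "pmf p a = 0 \<or> pmf q b = 0" using pmf_nonneg[of p a] pmf_nonneg[of q b] by linarith
    then show ?thesis by auto
  qed
qed

lemma avg_single:
  assumes nn: "\<And>a b t. pmf p a > 0 \<Longrightarrow> pmf q b > 0 \<Longrightarrow> pmf (d a b) t > 0 \<Longrightarrow> 0 \<le> f t"
  shows "pmf p a * pmf q b * (pmf (d a b) t * f t) \<le> avg p q d f"
proof -
  have nn0: "0 \<le> pmf p a * pmf q b * (pmf (d a b) t * f t)" for a b t
  proof (cases "pmf p a > 0 \<and> pmf q b > 0 \<and> pmf (d a b) t > 0")
    case True then show ?thesis using nn by auto
  next
    case False
    then have "pmf p a = 0 \<or> pmf q b = 0 \<or> pmf (d a b) t = 0"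
      using pmf_nonneg[of p a] pmf_nonneg[of q b] pmf_nonneg[of "d a b" t] by linarith
    then show ?thesis by auto
  qed
  have e: "avg p q d f = (\<Sum>a\<in>UNIV. \<Sum>b\<in>UNIV. \<Sum>t\<in>UNIV. pmf p a * pmf q b * (pmf (d a b) t * f t))"
    unfolding avg_def by (simp add: sum_distrib_left)
  have "pmf p a * pmf q b * (pmf (d a b) t * f t) \<le> (\<Sum>t\<in>UNIV. pmf p a * pmf q b * (pmf (d a b) t * f t))"
    by (rule member_le_sum) (auto intro: nn0)
  also have "\<dots> \<le> (\<Sum>b\<in>UNIV. \<Sum>t\<in>UNIV. pmf p a * pmf q b * (pmf (d a b) t * f t))"
    by (rule member_le_sum) (auto intro!: sum_nonneg nn0)
  also have "\<dots> \<le> (\<Sum>a\<in>UNIV. \<Sum>b\<in>UNIV. \<Sum>t\<in>UNIV. pmf p a * pmf q b * (pmf (d a b) t * f t))"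
    by (rule member_le_sum) (auto intro!: sum_nonneg nn0)
  finally show ?thesis using e by simp
qed

lemma avg_zero_supp:
  assumes nn: "\<And>a b t. pmf p a > 0 \<Longrightarrow> pmf q b > 0 \<Longrightarrow> pmf (d a b) t > 0 \<Longrightarrow> 0 \<le> f t"
    and z: "avg p q d f \<le> 0" and pos: "pmf p a > 0" "pmf q b > 0" "pmf (d a b) t > 0"
  shows "f t \<le> 0"
proof (rule ccontr)
  assume "\<not> f t \<le> 0"
  then have "0 < pmf p a * pmf q b * (pmf (d a b) t * f t)" using pos by simp
  moreover have "pmf p a * pmf q b * (pmf (d a b) t * f t) \<le> avg p q d f"
    by (intro avg_single nn)
  ultimately show False using z by linarith
qed

lemma val_facts:
  fixes delta :: "'s::finite \<Rightarrow> 'm::finite \<Rightarrow> 'm \<Rightarrow> 's pmf"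
  assumes ne: "\<forall>s. Mv2 s \<noteq> {}"
  shows "{\<pi>2. strategy Mv2 \<pi>2} \<noteq> {}"
    and "bdd_below ((\<lambda>\<pi>2. prob_reach delta T \<pi>1 \<pi>2 s) ` {\<pi>2. strategy Mv2 \<pi>2})"
    and "0 \<le> val1_strat Mv2 delta T \<pi>1 s"
proof -
  have "strategy Mv2 (memoryless (\<lambda>x. return_pmf (SOME c. c \<in> Mv2 x)))"
    using ne by (auto simp: strategy_def memoryless_def some_in_eq)
  then show ne2: "{\<pi>2. strategy Mv2 \<pi>2} \<noteq> {}" by blast
  show bd: "bdd_below ((\<lambda>\<pi>2. prob_reach delta T \<pi>1 \<pi>2 s) ` {\<pi>2. strategy Mv2 \<pi>2})"
    by (rule bdd_belowI[where m=0]) (auto intro: prob_reach_nonneg)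
  show "0 \<le> val1_strat Mv2 delta T \<pi>1 s"
    unfolding val1_strat_def by (rule cINF_greatest[OF ne2]) (auto intro: prob_reach_nonneg)
qed

lemma superharm:
  fixes delta :: "'s::finite \<Rightarrow> 'm::finite \<Rightarrow> 'm \<Rightarrow> 's pmf"
  assumes ne: "\<forall>s. Mv2 s \<noteq> {}" and sT: "s \<notin> T" and bM: "b \<in> Mv2 s"
  shows "val1_strat Mv2 delta T (memoryless g) s \<le>
    avg (g s) (return_pmf b) (delta s) (val1_strat Mv2 delta T (memoryless g))"
proof -
  let ?v = "val1_strat Mv2 delta T (memoryless g)"
  let ?A = "avg (g s) (return_pmf b) (delta s)"
  define Sel2 where "Sel2 x = return_pmf (if x = s then b else SOME c. c \<in> Mv2 x)" for x
  have Sel2s: "Sel2 s = return_pmf b" by (simp add: Sel2_def)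
  have Sel2ok: "set_pmf (Sel2 x) \<subseteq> Mv2 x" for x
    using ne bM by (auto simp: Sel2_def some_in_eq)
  note vf = val_facts[OF ne]
  have vle: "strategy Mv2 \<pi>2 \<Longrightarrow> ?v t \<le> prob_reach delta T (memoryless g) \<pi>2 t" for \<pi>2 t
    unfolding val1_strat_def by (rule cINF_lower[OF vf(2)]) auto
  have vge: "0 \<le> ?v t" for t by (rule vf(3))
  show ?thesis
  proof (rule field_le_epsilon)
    fix e :: real assume e: "0 < e"
    have "\<forall>t. \<exists>\<pi>. strategy Mv2 \<pi> \<and> prob_reach delta T (memoryless g) \<pi> t < ?v t + e"
    proof
      fix t
      have "(INF \<pi>2\<in>{\<pi>2. strategy Mv2 \<pi>2}. prob_reach delta T (memoryless g) \<pi>2 t) < ?v t + e"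
        using e by (simp add: val1_strat_def)
      then show "\<exists>\<pi>. strategy Mv2 \<pi> \<and> prob_reach delta T (memoryless g) \<pi> t < ?v t + e"
        by (subst (asm) cINF_less_iff[OF vf(1) vf(2)]) blast
    qed
    then obtain P where P: "\<And>t. strategy Mv2 (P t)" "\<And>t. prob_reach delta T (memoryless g) (P t) t < ?v t + e"
      by metis
    define \<pi>2 where "\<pi>2 h = (case h of x # t # rest \<Rightarrow> P t (t # rest) | _ \<Rightarrow> Sel2 (last h))" for h
    have st: "strategy Mv2 \<pi>2"
      unfolding strategy_def
    proof (intro allI impI)
      fix h :: "'s list" assume "h \<noteq> []"
      then obtain x rest where h: "h = x # rest" by (cases h) auto
      show "set_pmf (\<pi>2 h) \<subseteq> Mv2 (last h)"
      proof (cases rest)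
        case Nil then show ?thesis using h Sel2ok by (simp add: \<pi>2_def)
        next
        case (Cons t r)
        have "set_pmf (P t (t # r)) \<subseteq> Mv2 (last (t # r))"
          using P(1)[of t] unfolding strategy_def by blast
        then show ?thesis using h Cons by (simp add: \<pi>2_def)
      qed
    qed
    have key: "reach_n delta T (memoryless g) \<pi>2 n [s, t] = reach_n delta T (memoryless g) (P t) n [t]" for n t
    proof -
      have "reach_n delta T (memoryless g) \<pi>2 n (s # [t]) =
          reach_n delta T (\<lambda>h. memoryless g (s # h)) (\<lambda>h. \<pi>2 (s # h)) n [t]"
        by (rule reach_shift) simp
      also have "\<dots> = reach_n delta T (memoryless g) (P t) n [t]"
        by (rule reach_cong) (auto simp: memoryless_def \<pi>2_def)
      finally show ?thesis by simp
    qed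
    have Ann: "0 \<le> ?A ?v" by (rule avg_nonneg) (rule vge)
    have bnd: "reach_n delta T (memoryless g) \<pi>2 n [s] \<le> ?A ?v + e" for n
    proof (cases n)
      case 0 then show ?thesis using sT Ann e by simp
    next
      case (Suc m)
      have "reach_n delta T (memoryless g) \<pi>2 n [s] = ?A (\<lambda>t. reach_n delta T (memoryless g) (P t) m [t])"
        using sT Suc by (simp add: reach_Suc memoryless_app \<pi>2_def Sel2s key)
      also have "\<dots> \<le> ?A (\<lambda>t. ?v t + e)"
      proof (rule avg_mono)
        fix t
        show "reach_n delta T (memoryless g) (P t) m [t] \<le> ?v t + e"
          using prob_reach_ge[of delta T "memoryless g" "P t" m t] P(2)[of t] by linarith
      qed
      also have "\<dots> = ?A ?v + e" by (rule avg_add)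
      finally show ?thesis .
    qed
    have "prob_reach delta T (memoryless g) \<pi>2 s \<le> ?A ?v + e"
      unfolding prob_reach_def by (rule cSUP_least) (auto intro: bnd)
    then show "?v s \<le> ?A ?v + e" using vle[OF st, of s] by linarith
  qed
qed



lemma Pre_pair_avg: "Pre_pair delta v xi1 xi2 s = avg (xi1 s) (xi2 s) (delta s) v"
  unfolding Pre_pair_def avg_def
  by (simp add: sum_distrib_left sum_distrib_right mult_ac)

theorem lemma6:
  fixes Mv1 Mv2 :: "'s::finite \<Rightarrow> 'm::finite set"
    and delta :: "'s \<Rightarrow> 'm \<Rightarrow> 'm \<Rightarrow> 's pmf"
    and T :: "'s set"
    and gamma :: "nat \<Rightarrow> 's \<Rightarrow> 'm pmf"
    and i :: nat
  assumes "cgs Mv1 Mv2"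
    and "absorbing Mv1 Mv2 delta (T \<union> W2 Mv1 Mv2 delta T)"
    and "gamma 0 = uniform_selector Mv1"
    and "\<forall>j\<le>i. improve_step Mv1 Mv2 delta T (gamma j) (gamma (Suc j))"
    and "proper_selector Mv1 Mv2 delta T (gamma i)"
  shows "proper_selector Mv1 Mv2 delta T (gamma (Suc i))"
proof -
  define X where "X = T \<union> W2 Mv1 Mv2 delta T"
  define g where "g = gamma i"
  define g' where "g' = gamma (Suc i)"
  define v where "v = val1_strat Mv2 delta T (memoryless g)"
  define I where "I = {s. s \<notin> T \<union> W2 Mv1 Mv2 delta T \<and> Pre1 Mv1 Mv2 delta v s > v s}"
  have ne: "\<forall>s. Mv2 s \<noteq> {}" using assms(1) by (simp add: cgs_def)
  have "improve_step Mv1 Mv2 delta T g g'" using assms(4) by (simp add: g_def g'_def)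
  then obtain xi1 where xs: "selector Mv1 xi1"
    and xeq: "\<forall>s\<in>I. Pre1_sel Mv2 delta v xi1 s = Pre1 Mv1 Mv2 delta v s"
    and g'eq: "g' = (\<lambda>s. if s \<in> I then xi1 s else g s)"
    unfolding improve_step_def Let_def v_def[symmetric] I_def[symmetric] by blast
  have gprop: "proper_strategy Mv1 Mv2 delta T (memoryless g)"
    using assms(5) by (simp add: proper_selector_def g_def)
  have vnn: "0 \<le> v t" for t unfolding v_def by (rule val_facts(3)[OF ne])
  show ?thesis
  proof (rule ccontr)
    assume "\<not> ?thesis"
    then obtain \<pi>2 s0 where st: "strategy Mv2 \<pi>2" and s0: "s0 \<notin> X"
      and bad: "prob_reach delta X (memoryless g') \<pi>2 s0 \<noteq> 1"
      unfolding proper_selector_def proper_strategy_def X_def g'_def by blast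
    obtain N where stab: "att delta X g' Mv2 (Suc N) = att delta X g' Mv2 N" using att_stab by blast
    define Z where "Z = - att delta X g' Mv2 N"
    have "Z \<noteq> {}"
    proof
      assume "Z = {}"
      then have "\<forall>s. s \<in> att delta X g' Mv2 N" by (auto simp: Z_def)
      then show False using no_trap_proper[OF _ st] bad by blast
    qed
    have ZX: "s \<in> Z \<Longrightarrow> s \<notin> X" for s
      using att_mono[of 0 N delta X g' Mv2] by (auto simp: Z_def)
    have "\<forall>s\<in>Z. \<exists>b\<in>Mv2 s. \<forall>a t. pmf (g' s) a > 0 \<longrightarrow> pmf (delta s a b) t > 0 \<longrightarrow> t \<in> Z"
    proof
      fix s assume "s \<in> Z"
      then have "s \<notin> att delta X g' Mv2 (Suc N)" using stab by (simp add: Z_def)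
      then show "\<exists>b\<in>Mv2 s. \<forall>a t. pmf (g' s) a > 0 \<longrightarrow> pmf (delta s a b) t > 0 \<longrightarrow> t \<in> Z"
        by (auto simp: Z_def)
    qed
    then obtain \<beta> where \<beta>: "\<forall>s\<in>Z. \<beta> s \<in> Mv2 s \<and>
        (\<forall>a t. pmf (g' s) a > 0 \<longrightarrow> pmf (delta s a (\<beta> s)) t > 0 \<longrightarrow> t \<in> Z)"
      by metis
    define M where "M = Max (v ` Z)"
    define Z2 where "Z2 = {s\<in>Z. v s = M}"
    have "M \<in> v ` Z" unfolding M_def using \<open>Z \<noteq> {}\<close> by (intro Max_in) auto
    then have Z2ne: "Z2 \<noteq> {}" by (auto simp: Z2_def)
    have vM: "t \<in> Z \<Longrightarrow> v t \<le> M" for t unfolding M_def by (intro Max_ge) auto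
    have trap2: "\<forall>s\<in>Z2. s \<notin> X \<and> \<beta> s \<in> Mv2 s \<and>
        (\<forall>a t. pmf (g s) a > 0 \<longrightarrow> pmf (delta s a (\<beta> s)) t > 0 \<longrightarrow> t \<in> Z2)"
    proof
      fix s assume sZ2: "s \<in> Z2"
      then have sZ: "s \<in> Z" and vs: "v s = M" by (auto simp: Z2_def)
      have bM: "\<beta> s \<in> Mv2 s" using \<beta> sZ by auto
      define \<xi>2 where "\<xi>2 x = return_pmf (if x = s then \<beta> s else SOME c. c \<in> Mv2 x)" for x
      have \<xi>2s: "\<xi>2 s = return_pmf (\<beta> s)" by (simp add: \<xi>2_def)
      have \<xi>2sel: "selector Mv2 \<xi>2" using ne bM by (auto simp: selector_def \<xi>2_def some_in_eq)
      let ?A = "\<lambda>f. avg f (return_pmf (\<beta> s)) (delta s)"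
      have QM: "?A (g' s) v \<le> M"
      proof -
        have "?A (g' s) v \<le> ?A (g' s) (\<lambda>t. M)"
        proof (rule avg_mono_supp)
          fix a b t assume "0 < pmf (g' s) a" "0 < pmf (return_pmf (\<beta> s)) b" "0 < pmf (delta s a b) t"
          then have "t \<in> Z" using \<beta> sZ by (auto split: split_indicator_asm)
          then show "v t \<le> M" by (rule vM)
        qed
        then show ?thesis by (simp add: avg_const)
      qed
      have sI: "s \<notin> I"
      proof
        assume "s \<in> I"
        then have "M < Pre1_sel Mv2 delta v xi1 s" using xeq vs by (auto simp: I_def)
        also have "Pre1_sel Mv2 delta v xi1 s \<le> Pre_pair delta v xi1 \<xi>2 s"
          unfolding Pre1_sel_def
          by (rule cINF_lower) (auto intro!: bdd_belowI[where m=0] sum_nonneg mult_nonneg_nonneg vnn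
              simp: Pre_pair_def \<xi>2sel)
        also have "\<dots> = ?A (g' s) v" using \<open>s \<in> I\<close> by (simp add: Pre_pair_avg \<xi>2s g'eq)
        finally show False using QM by simp
      qed
      then have gg: "g' s = g s" by (simp add: g'eq)
      have sT: "s \<notin> T" using ZX[OF sZ] by (simp add: X_def)
      have "M \<le> ?A (g s) v" using superharm[OF ne sT bM, where g=g and delta=delta] vs by (simp add: v_def)
      then have z: "?A (g s) (\<lambda>t. M - v t) \<le> 0" by (simp add: avg_lin)
      show "s \<notin> X \<and> \<beta> s \<in> Mv2 s \<and>
        (\<forall>a t. pmf (g s) a > 0 \<longrightarrow> pmf (delta s a (\<beta> s)) t > 0 \<longrightarrow> t \<in> Z2)"
      proof (intro conjI allI impI)
        show "s \<notin> X" by (rule ZX[OF sZ])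
        show "\<beta> s \<in> Mv2 s" by (rule bM)
        fix a t assume a: "pmf (g s) a > 0" and t: "pmf (delta s a (\<beta> s)) t > 0"
        have tZ: "t \<in> Z" using \<beta> sZ a t gg by auto
        have "M - v t \<le> 0"
        proof (rule avg_zero_supp[OF _ z a _ t])
          fix a' b' t' assume "0 < pmf (g s) a'" "0 < pmf (return_pmf (\<beta> s)) b'" "0 < pmf (delta s a' b') t'"
          then have "t' \<in> Z" using \<beta> sZ gg by (auto split: split_indicator_asm)
          then show "0 \<le> M - v t'" using vM by simp
        qed simp
        then show "t \<in> Z2" using vM[OF tZ] tZ by (simp add: Z2_def)
      qed
    qed
    obtain s1 where s1: "s1 \<in> Z2" using Z2ne by blast
    obtain \<pi>2' where st': "strategy Mv2 \<pi>2'" and z0: "prob_reach delta X (memoryless g) \<pi>2' s1 = 0"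
      using trap_improper[where Z=Z2 and g=g and delta=delta and \<beta>=\<beta> and X=X, OF ne trap2 s1] by blast
    have "s1 \<notin> X" using trap2 s1 by auto
    then have "prob_reach delta X (memoryless g) \<pi>2' s1 = 1"
      using gprop st' unfolding proper_strategy_def X_def by blast
    then show False using z0 by simp
  qed
qed


end
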